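(* Let $f_1,f_2$ be strongly hyperbolic functions, $a_1,a_2>0$, $b_1,b_2,c_1,c_2\in\mathbb{R}$, and let $D_1=\overline{f_{a_1,b_1,c_1}}$, $D_2=\overline{f_{a_2,b_2,c_2}}$ be distinct with $D_1\cap D_2=\{p\}$. (1) If $p=(b,\infty)$ with $b\in\mathbb{R}$, then $a_1=a_2$, $b_1=b_2=-b$ and $c_1\neq c_2$. (2) If $p=(\infty,c)$ with $c\in\mathbb{R}$, then $a_1=a_2$, $b_1\neq b_2$ and $c_1=c_2=c$. (3) If $p=(x_p,y_p)\in\mathbb{R}^2$, then $f'_{a_1,b_1,c_1}(x_p)=f'_{a_2,b_2,c_2}(x_p)$.
   Context: Identify $\mathbb{S}^1$ with $\mathbb{R}\cup\{\infty\}$, $\mathcal{P}=\mathbb{S}^1\times\mathbb{S}^1$, $\mathbb{R}^+=(0,\infty)$. A function $f:\mathbb{R}^+\to\mathbb{R}^+$ is strongly hyperbolic if: (1) $\lim_{x\to0+}f(x)=+\infty$, $\lim_{x\to+\infty}f(x)=0$; (2) $f$ strictly convex; (3) $\lim_{x\to+\infty}f(x+b)/f(x)=1$ for each $b\in\mathbb{R}$; (4) $f$ differentiable; (5) $\ln|f'|$ strictly convex. For $a>0$, $b,c\in\mathbb{R}$: $f_{a,b,c}:\mathbb{R}\setminus\{-b\}\to\mathbb{R}$, $f_{a,b,c}(x)=af_1(x+b)+c$ for $x>-b$, $f_{a,b,c}(x)=-af_2(-x-b)+c$ for $x<-b$; $\overline{f_{a,b,c}}=\{(x,f_{a,b,c}(x)):x\ne-b\}\cup\{(-b,\infty),(\infty,c)\}\subset\mathcal{P}$.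 *)

theory Defs
  imports "HOL-Analysis.Analysis"
begin

text \<open>The circle S^1 identified with the real line plus one point at infinity.\<close>
datatype circ = Fin real | Infty

definition strictly_convex_on :: "real set \<Rightarrow> (real \<Rightarrow> real) \<Rightarrow> bool" where
  "strictly_convex_on S f \<longleftrightarrow> convex S \<and>
     (\<forall>x\<in>S. \<forall>y\<in>S. \<forall>t. x \<noteq> y \<and> 0 < t \<and> t < 1 \<longrightarrow>
        f ((1 - t) * x + t * y) < (1 - t) * f x + t * f y)"

definition strongly_hyperbolic :: "(real \<Rightarrow> real) \<Rightarrow> bool" where
  "strongly_hyperbolic f \<longleftrightarrow>
     (\<forall>x>0. f x > 0) \<and>
     filterlim f at_top (at_right 0) \<and>
     (f \<longlongrightarrow> 0) at_top \<and>
     strictly_convex_on {0<..} f \<and>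
     (\<forall>b. ((\<lambda>x. f (x + b) / f x) \<longlongrightarrow> 1) at_top) \<and>
     (\<forall>x>0. f differentiable (at x)) \<and>
     strictly_convex_on {0<..} (\<lambda>x. ln \<bar>deriv f x\<bar>)"

text \<open>The function f_{a,b,c} built from f1 and f2; its value at the excluded point -b
  is irrelevant (set to c).\<close>
definition fabc :: "(real \<Rightarrow> real) \<Rightarrow> (real \<Rightarrow> real) \<Rightarrow> real \<Rightarrow> real \<Rightarrow> real \<Rightarrow> real \<Rightarrow> real" where
  "fabc f1 f2 a b c x =
     (if x > -b then a * f1 (x + b) + c
      else if x < -b then - a * f2 (- x - b) + c
      else c)"

definition fabc_bar :: "(real \<Rightarrow> real) \<Rightarrow> (real \<Rightarrow> real) \<Rightarrow> real \<Rightarrow> real \<Rightarrow> real \<Rightarrow> (circ \<times> circ) set" where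
  "fabc_bar f1 f2 a b c =
     {(Fin x, Fin (fabc f1 f2 a b c x)) | x. x \<noteq> -b} \<union> {(Fin (-b), Infty), (Infty, Fin c)}"

end

theory Submission
  imports Defs
begin

lemma fabc_right: "x > -b \<Longrightarrow> fabc f1 f2 a b c x = a * f1 (x+b) + c"
  by (simp add: fabc_def)
lemma fabc_left: "x < -b \<Longrightarrow> fabc f1 f2 a b c x = - a * f2 (-x-b) + c"
  by (simp add: fabc_def)

lemma fabc_differentiable:
  assumes "strongly_hyperbolic f1" "strongly_hyperbolic f2" "x \<noteq> -b"
  shows "fabc f1 f2 a b c differentiable (at x)"
proof (cases "x > -b")
  case True
  have "f1 differentiable (at (x+b))" using assms(1) True unfolding strongly_hyperbolic_def by auto
  hence d: "(f1 has_real_derivative deriv f1 (x+b)) (at (x+b))"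
    using DERIV_deriv_iff_real_differentiable by blast
  have e: "((\<lambda>y. y + b) has_real_derivative 1) (at x)" by (auto intro!: derivative_eq_intros)
  have h: "((\<lambda>y. f1 (y+b)) has_real_derivative (deriv f1 (x+b) * 1)) (at x)"
    using DERIV_chain2[OF d e] by simp
  have "((\<lambda>y. a * f1 (y+b) + c) has_real_derivative a * (deriv f1 (x+b) * 1)) (at x)"
    using h by (auto intro!: derivative_eq_intros)
  hence "(fabc f1 f2 a b c has_real_derivative a * (deriv f1 (x+b) * 1)) (at x)"
    by (rule has_field_derivative_transform_within_open[where S="{-b<..}"]) (use True in \<open>auto simp: fabc_right\<close>)
  thus ?thesis using real_differentiable_def by blast
next
  case False
  hence F: "x < -b" using assms(3) by auto
  have "f2 differentiable (at (-x-b))" using assms(2) F unfolding strongly_hyperbolic_def by auto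
  hence d: "(f2 has_real_derivative deriv f2 (-x-b)) (at (-x-b))"
    using DERIV_deriv_iff_real_differentiable by blast
  have e: "((\<lambda>y. -y-b) has_real_derivative (-1)) (at x)" by (auto intro!: derivative_eq_intros)
  have h: "((\<lambda>y. f2 (-y-b)) has_real_derivative (deriv f2 (-x-b) * (-1))) (at x)"
    using DERIV_chain2[OF d e] by simp
  have "((\<lambda>y. - a * f2 (-y-b) + c) has_real_derivative - a * (deriv f2 (-x-b) * (-1))) (at x)"
    using h by (auto intro!: derivative_eq_intros)
  hence "(fabc f1 f2 a b c has_real_derivative - a * (deriv f2 (-x-b) * (-1))) (at x)"
    by (rule has_field_derivative_transform_within_open[where S="{..< -b}"]) (use F in \<open>auto simp: fabc_left\<close>)
  thus ?thesis using real_differentiable_def by blast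
qed

lemma fabc_isCont:
  assumes "strongly_hyperbolic f1" "strongly_hyperbolic f2" "x \<noteq> -b"
  shows "isCont (fabc f1 f2 a b c) x"
  using fabc_differentiable[OF assms] differentiable_imp_continuous_within by blast

lemma fabc_lim_right:
  assumes "strongly_hyperbolic f1" "a > 0"
  shows "filterlim (fabc f1 f2 a b c) at_top (at_right (-b))"
proof -
  have f1: "filterlim f1 at_top (at_right 0)" using assms(1) unfolding strongly_hyperbolic_def by auto
  have s: "filterlim (\<lambda>x. x + b) (at_right 0) (at_right (-b))"
  proof (rule tendsto_imp_filterlim_at_right)
    show "((\<lambda>x. x + b) \<longlongrightarrow> 0) (at_right (- b))"
      proof -
      have "((\<lambda>x. x + b) \<longlongrightarrow> -b + b) (at_right (- b))" by (intro tendsto_intros)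
      thus ?thesis by simp
    qed
    show "\<forall>\<^sub>F x in at_right (- b). 0 < x + b"
      using eventually_at_right_less[of "-b"] by (auto elim: eventually_mono)
  qed
  have a: "filterlim (\<lambda>x. a * f1 (x+b)) at_top (at_right (-b))"
    using filterlim_tendsto_pos_mult_at_top[OF tendsto_const assms(2) filterlim_compose[OF f1 s]] by simp
  have l: "filterlim (\<lambda>x. a * f1 (x+b) + c) at_top (at_right (-b))"
    using filterlim_tendsto_add_at_top[OF tendsto_const[of c] a] by (simp add: add.commute)
  have ev: "\<forall>\<^sub>F x in at_right (- b). a * f1 (x+b) + c = fabc f1 f2 a b c x"
    using eventually_at_right_less[of "-b"] by (auto elim!: eventually_mono simp: fabc_right)
  show ?thesis using filterlim_cong[OF refl refl ev, THEN iffD1, OF l] .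
qed

lemma ev_left_less: "\<forall>\<^sub>F x in at_left (m::real). x < m"
  unfolding eventually_at_left_field by (rule exI[of _ "m-1"]) auto

lemma fabc_lim_left:
  assumes "strongly_hyperbolic f2" "a > 0"
  shows "filterlim (\<lambda>x. - fabc f1 f2 a b c x) at_top (at_left (-b))"
proof -
  have f2: "filterlim f2 at_top (at_right 0)" using assms(1) unfolding strongly_hyperbolic_def by auto
  have s: "filterlim (\<lambda>x. -x - b) (at_right 0) (at_left (-b))"
  proof (rule tendsto_imp_filterlim_at_right)
    show "((\<lambda>x. -x - b) \<longlongrightarrow> 0) (at_left (- b))"
    proof -
      have "((\<lambda>x. -x - b) \<longlongrightarrow> -(-b) - b) (at_left (- b))" by (intro tendsto_intros)
      thus ?thesis by simp
    qed
    show "\<forall>\<^sub>F x in at_left (- b). 0 < -x - b"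
      using ev_left_less[of "-b"] by (auto elim: eventually_mono)
  qed
  have a: "filterlim (\<lambda>x. a * f2 (-x-b)) at_top (at_left (-b))"
    using filterlim_tendsto_pos_mult_at_top[OF tendsto_const assms(2) filterlim_compose[OF f2 s]] by simp
  have l: "filterlim (\<lambda>x. a * f2 (-x-b) + (-c)) at_top (at_left (-b))"
    using filterlim_tendsto_add_at_top[OF tendsto_const[of "-c"] a] by (simp add: add.commute)
  have ev: "\<forall>\<^sub>F x in at_left (- b). a * f2 (-x-b) + (-c) = - fabc f1 f2 a b c x"
    using ev_left_less[of "-b"] by (auto elim!: eventually_mono simp: fabc_left)
  show ?thesis using filterlim_cong[OF refl refl ev, THEN iffD1, OF l] .
qed

lemma fabc_lim_top:
  assumes "strongly_hyperbolic f1"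
  shows "(fabc f1 f2 a b c \<longlongrightarrow> c) at_top"
proof -
  have f1: "(f1 \<longlongrightarrow> 0) at_top" using assms(1) unfolding strongly_hyperbolic_def by auto
  have s: "filterlim (\<lambda>x. x + b) at_top at_top"
    using filterlim_tendsto_add_at_top[OF tendsto_const[of b] filterlim_ident] by (simp add: add.commute)
  have "((\<lambda>x. a * f1 (x+b) + c) \<longlongrightarrow> a * 0 + c) at_top"
    by (intro tendsto_intros filterlim_compose[OF f1 s])
  hence l: "((\<lambda>x. a * f1 (x+b) + c) \<longlongrightarrow> c) at_top" by simp
  have ev: "\<forall>\<^sub>F x in at_top. a * f1 (x+b) + c = fabc f1 f2 a b c x"
    using eventually_gt_at_top[of "-b"] by (rule eventually_mono) (simp add: fabc_right)
  show ?thesis using filterlim_cong[OF refl refl ev, THEN iffD1, OF l] .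
qed

lemma fabc_lim_bot:
  assumes "strongly_hyperbolic f2"
  shows "(fabc f1 f2 a b c \<longlongrightarrow> c) at_bot"
proof -
  have f2: "(f2 \<longlongrightarrow> 0) at_top" using assms(1) unfolding strongly_hyperbolic_def by auto
  have s: "filterlim (\<lambda>x. -x - b) at_top at_bot"
    unfolding filterlim_at_top
  proof
    fix Z
    show "\<forall>\<^sub>F x in at_bot. Z \<le> - x - b"
      using eventually_le_at_bot[of "-Z-b"] by (rule eventually_mono) auto
  qed
  have "((\<lambda>x. - a * f2 (-x-b) + c) \<longlongrightarrow> - a * 0 + c) at_bot"
    by (intro tendsto_intros filterlim_compose[OF f2 s])
  hence l: "((\<lambda>x. - a * f2 (-x-b) + c) \<longlongrightarrow> c) at_bot" by simp
  have ev: "\<forall>\<^sub>F x in at_bot. - a * f2 (-x-b) + c = fabc f1 f2 a b c x"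
    using eventually_le_at_bot[of "-b-1"] by (rule eventually_mono) (simp add: fabc_left)
  show ?thesis using filterlim_cong[OF refl refl ev, THEN iffD1, OF l] .
qed

lemma ratio_top:
  assumes "strongly_hyperbolic f" "a1 > a2" "a2 > 0"
  shows "\<forall>\<^sub>F x in at_top. a1 * f (x + b1) > a2 * f (x + b2)"
proof -
  have r: "((\<lambda>y. f (y + (b1 - b2)) / f y) \<longlongrightarrow> 1) at_top"
    using assms(1) unfolding strongly_hyperbolic_def by auto
  have s: "filterlim (\<lambda>x. x + b2) at_top at_top"
    using filterlim_tendsto_add_at_top[OF tendsto_const[of b2] filterlim_ident] by (simp add: add.commute)
  have r2: "((\<lambda>x. f (x + b1) / f (x + b2)) \<longlongrightarrow> 1) at_top"
    using filterlim_compose[OF r s] by (simp add: algebra_simps)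
  have q: "a2 / a1 < 1" using assms by simp
  have e1: "\<forall>\<^sub>F x in at_top. a2 / a1 < f (x + b1) / f (x + b2)"
    using order_tendstoD(1)[OF r2 q] .
  have e2: "\<forall>\<^sub>F x in at_top. f (x + b2) > 0"
  proof (rule eventually_mono[OF eventually_gt_at_top[of "-b2"]])
    fix x assume "-b2 < x" thus "f (x + b2) > 0"
      using assms(1) unfolding strongly_hyperbolic_def by auto
  qed
  show ?thesis using e1 e2
  proof eventually_elim
    case (elim x)
    then show ?case using assms by (simp add: field_simps)
  qed
qed

lemma ratio_bot:
  assumes "strongly_hyperbolic f" "a1 > a2" "a2 > 0"
  shows "\<forall>\<^sub>F x in at_bot. a1 * f (-x - b1) > a2 * f (-x - b2)"
proof -
  have "\<forall>\<^sub>F y in at_top. a1 * f (y + (-b1)) > a2 * f (y + (-b2))"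
    using ratio_top[OF assms] .
  thus ?thesis unfolding at_bot_mirror[where 'a=real] eventually_filtermap by simp
qed

lemma pick_top: "eventually P at_top \<Longrightarrow> \<exists>x::real. x > B \<and> P x"
  unfolding eventually_at_top_linorder
proof (elim exE)
  fix N assume "\<forall>n\<ge>N. P n"
  thus "\<exists>x::real. x > B \<and> P x" by (intro exI[of _ "max N (B+1)"]) auto
qed

lemma pick_bot: "eventually P at_bot \<Longrightarrow> \<exists>x::real. x < B \<and> P x"
  unfolding eventually_at_bot_linorder
proof (elim exE)
  fix N assume "\<forall>n\<le>N. P n"
  thus "\<exists>x::real. x < B \<and> P x" by (intro exI[of _ "min N (B-1)"]) auto
qed

lemma pick_right: "eventually P (at_right m) \<Longrightarrow> (m::real) < B \<Longrightarrow> \<exists>x. m < x \<and> x < B \<and> P x"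
  unfolding eventually_at_right_field
proof (elim exE conjE)
  fix b assume "b > m" "\<forall>y>m. y < b \<longrightarrow> P y" "m < B"
  thus "\<exists>x. m < x \<and> x < B \<and> P x"
    by (intro exI[of _ "(m + min b B)/2"]) auto
qed

lemma pick_left: "eventually P (at_left m) \<Longrightarrow> B < (m::real) \<Longrightarrow> \<exists>x. B < x \<and> x < m \<and> P x"
  unfolding eventually_at_left_field
proof (elim exE conjE)
  fix b assume "b < m" "\<forall>y>b. y < m \<longrightarrow> P y" "B < m"
  thus "\<exists>x. B < x \<and> x < m \<and> P x"
    by (intro exI[of _ "(m + max b B)/2"]) auto
qed

lemma ev_less: "filterlim g at_top F \<Longrightarrow> (h \<longlongrightarrow> (L::real)) F \<Longrightarrow> eventually (\<lambda>x. h x < g x) F"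
proof -
  assume g: "filterlim g at_top F" and h: "(h \<longlongrightarrow> L) F"
  have "eventually (\<lambda>x. h x < L + 1) F" using order_tendstoD(2)[OF h] by simp
  moreover have "eventually (\<lambda>x. L + 1 < g x) F" using g unfolding filterlim_at_top_dense by auto
  ultimately show ?thesis by eventually_elim auto
qed

lemma isCont_right: "isCont h (m::real) \<Longrightarrow> (h \<longlongrightarrow> h m) (at_right m)"
  unfolding isCont_def using tendsto_mono[OF at_le[OF subset_UNIV]] by blast
lemma isCont_left: "isCont h (m::real) \<Longrightarrow> (h \<longlongrightarrow> h m) (at_left m)"
  unfolding isCont_def using tendsto_mono[OF at_le[OF subset_UNIV]] by blast

lemma P3:
  assumes SH1: "strongly_hyperbolic f1" and SH2: "strongly_hyperbolic f2"
    and a1: "a1 > 0" and a2: "a2 > 0" and bb: "b2 < b1" and cc: "c1 \<noteq> c2"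
    and xp1: "xp \<noteq> -b1" and xp2: "xp \<noteq> -b2"
    and eq: "fabc f1 f2 a1 b1 c1 xp = fabc f1 f2 a2 b2 c2 xp"
    and uniq: "\<And>x. x \<noteq> -b1 \<Longrightarrow> x \<noteq> -b2 \<Longrightarrow> fabc f1 f2 a1 b1 c1 x = fabc f1 f2 a2 b2 c2 x \<Longrightarrow> x = xp"
  shows "deriv (fabc f1 f2 a1 b1 c1) xp = deriv (fabc f1 f2 a2 b2 c2) xp"
proof (rule ccontr)
  assume neq: "deriv (fabc f1 f2 a1 b1 c1) xp \<noteq> deriv (fabc f1 f2 a2 b2 c2) xp"
  define g1 where "g1 = fabc f1 f2 a1 b1 c1"
  define g2 where "g2 = fabc f1 f2 a2 b2 c2"
  define m where "m = -b1"
  define M where "M = -b2"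
  define d where "d x = g1 x - g2 x" for x
  have mM: "m < M" using bb by (simp add: m_def M_def)
  have cont: "isCont d x" if "x \<noteq> m" "x \<noteq> M" for x
    unfolding d_def[abs_def] g1_def g2_def using that
    by (intro continuous_intros fabc_isCont SH1 SH2) (auto simp: m_def M_def)
  have zero: "x = xp" if "x \<noteq> m" "x \<noteq> M" "d x = 0" for x
    using uniq[of x] that by (simp add: d_def g1_def g2_def m_def M_def)
  have ivt: "\<exists>z. A \<le> z \<and> z \<le> B \<and> d z = 0"
    if "A \<le> B" "\<forall>x. A \<le> x \<and> x \<le> B \<longrightarrow> x \<noteq> m \<and> x \<noteq> M"
       "d A < 0 \<and> d B > 0 \<or> d A > 0 \<and> d B < 0" for A B
  proof -
    have c: "\<forall>x. A \<le> x \<and> x \<le> B \<longrightarrow> isCont d x" using that(2) cont by blast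
    show ?thesis
    proof (cases "d A < 0")
      case True
      hence "d B > 0" using that(3) by auto
      thus ?thesis using IVT[of d A 0 B] c True that(1) by auto
    next
      case False
      hence "d A > 0" "d B < 0" using that(3) by auto
      thus ?thesis using IVT2[of d B 0 A] c that(1) by auto
    qed
  qed
  have nocross: False
    if H: "A < u" "u < xp" "xp < v" "v < B" "\<forall>x. A \<le> x \<and> x \<le> B \<longrightarrow> x \<noteq> m \<and> x \<noteq> M"
       "d A > 0 \<and> d B > 0 \<or> d A < 0 \<and> d B < 0"
       "d u < 0 \<and> d v > 0 \<or> d u > 0 \<and> d v < 0" for A B u v
  proof -
    consider "d A < 0 \<and> d u > 0 \<or> d A > 0 \<and> d u < 0" | "d v < 0 \<and> d B > 0 \<or> d v > 0 \<and> d B < 0"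
      using H(6,7) by linarith
    thus False
    proof cases
      case 1
      then obtain z where "A \<le> z" "z \<le> u" "d z = 0" using ivt[of A u] H by auto
      moreover have "z \<noteq> m" "z \<noteq> M" using H \<open>A \<le> z\<close> \<open>z \<le> u\<close> by auto
      ultimately show False using zero H(2) by fastforce
    next
      case 2
      then obtain z where "v \<le> z" "z \<le> B" "d z = 0" using ivt[of v B] H by auto
      moreover have "z \<noteq> m" "z \<noteq> M" using H \<open>v \<le> z\<close> \<open>z \<le> B\<close> by auto
      ultimately show False using zero H(3) by fastforce
    qed
  qed
  define D where "D = deriv g1 xp - deriv g2 xp"
  have D0: "D \<noteq> 0" using neq by (simp add: D_def g1_def g2_def)
  have dg1: "(g1 has_real_derivative deriv g1 xp) (at xp)"
    unfolding g1_def using fabc_differentiable[OF SH1 SH2 xp1] DERIV_deriv_iff_real_differentiable by blast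
  have dg2: "(g2 has_real_derivative deriv g2 xp) (at xp)"
    unfolding g2_def using fabc_differentiable[OF SH1 SH2 xp2] DERIV_deriv_iff_real_differentiable by blast
  have dd: "(d has_real_derivative D) (at xp)"
    unfolding d_def[abs_def] D_def using DERIV_diff[OF dg1 dg2] .
  have dxp: "d xp = 0" using eq by (simp add: d_def g1_def g2_def)
  define \<epsilon> where "\<epsilon> = min \<bar>xp - m\<bar> \<bar>xp - M\<bar>"
  have eps: "\<epsilon> > 0" using xp1 xp2 by (auto simp: \<epsilon>_def m_def M_def)
  obtain u v where uv: "xp - \<epsilon> < u" "u < xp" "xp < v" "v < xp + \<epsilon>"
    "d u < 0 \<and> d v > 0 \<or> d u > 0 \<and> d v < 0"
  proof (cases "D > 0")
    case True
    obtain \<delta>1 where d1: "\<delta>1 > 0" "\<forall>h>0. h < \<delta>1 \<longrightarrow> d xp < d (xp + h)"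
      using DERIV_pos_inc_right[OF dd True] by blast
    obtain \<delta>2 where d2: "\<delta>2 > 0" "\<forall>h>0. h < \<delta>2 \<longrightarrow> d (xp - h) < d xp"
      using DERIV_pos_inc_left[OF dd True] by blast
    define h where "h = min (min \<delta>1 \<delta>2) \<epsilon> / 2"
    have h: "h > 0" "h < \<delta>1" "h < \<delta>2" "h < \<epsilon>" using d1 d2 eps by (auto simp: h_def)
    show ?thesis
      by (rule that[of "xp - h" "xp + h"]) (use h d1 d2 dxp in auto)
  next
    case False
    hence Dn: "D < 0" using D0 by auto
    obtain \<delta>1 where d1: "\<delta>1 > 0" "\<forall>h>0. h < \<delta>1 \<longrightarrow> d (xp + h) < d xp"
      using DERIV_neg_dec_right[OF dd Dn] by blast
    obtain \<delta>2 where d2: "\<delta>2 > 0" "\<forall>h>0. h < \<delta>2 \<longrightarrow> d xp < d (xp - h)"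
      using DERIV_neg_dec_left[OF dd Dn] by blast
    define h where "h = min (min \<delta>1 \<delta>2) \<epsilon> / 2"
    have h: "h > 0" "h < \<delta>1" "h < \<delta>2" "h < \<epsilon>" using d1 d2 eps by (auto simp: h_def)
    show ?thesis
      by (rule that[of "xp - h" "xp + h"]) (use h d1 d2 dxp in auto)
  qed
  have lim_top: "(d \<longlongrightarrow> c1 - c2) at_top"
    unfolding d_def[abs_def] g1_def g2_def by (intro tendsto_diff fabc_lim_top SH1)
  have lim_bot: "(d \<longlongrightarrow> c1 - c2) at_bot"
    unfolding d_def[abs_def] g1_def g2_def by (intro tendsto_diff fabc_lim_bot SH2)
  have Etop: "\<forall>\<^sub>F x in at_top. (c1 - c2) * d x > 0"
  proof -
    have "((\<lambda>x. (c1 - c2) * d x) \<longlongrightarrow> (c1 - c2) * (c1 - c2)) at_top"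
      by (intro tendsto_intros lim_top)
    moreover have "(c1 - c2) * (c1 - c2) > 0" using cc by (auto simp add: zero_less_mult_iff)
    ultimately show ?thesis using order_tendstoD(1) by blast
  qed
  have Ebot: "\<forall>\<^sub>F x in at_bot. (c1 - c2) * d x > 0"
  proof -
    have "((\<lambda>x. (c1 - c2) * d x) \<longlongrightarrow> (c1 - c2) * (c1 - c2)) at_bot"
      by (intro tendsto_intros lim_bot)
    moreover have "(c1 - c2) * (c1 - c2) > 0" using cc by (auto simp add: zero_less_mult_iff)
    ultimately show ?thesis using order_tendstoD(1) by blast
  qed
  have cg1M: "isCont g1 M" unfolding g1_def using mM by (intro fabc_isCont SH1 SH2) (auto simp: m_def)
  have cg2m: "isCont g2 m" unfolding g2_def using mM by (intro fabc_isCont SH1 SH2) (auto simp: M_def)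
  have Emr: "\<forall>\<^sub>F x in at_right m. d x > 0"
  proof -
    have "filterlim g1 at_top (at_right m)" unfolding g1_def m_def by (rule fabc_lim_right[OF SH1 a1])
    from ev_less[OF this isCont_right[OF cg2m]] show ?thesis by (rule eventually_mono) (simp add: d_def)
  qed
  have Eml: "\<forall>\<^sub>F x in at_left m. d x < 0"
  proof -
    have "filterlim (\<lambda>x. - g1 x) at_top (at_left m)" unfolding g1_def m_def by (rule fabc_lim_left[OF SH2 a1])
    from ev_less[OF this tendsto_minus[OF isCont_left[OF cg2m]]] show ?thesis by (rule eventually_mono) (simp add: d_def)
  qed
  have EMr: "\<forall>\<^sub>F x in at_right M. d x < 0"
  proof -
    have "filterlim g2 at_top (at_right M)" unfolding g2_def M_def by (rule fabc_lim_right[OF SH1 a2])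
    from ev_less[OF this isCont_right[OF cg1M]] show ?thesis by (rule eventually_mono) (simp add: d_def)
  qed
  have EMl: "\<forall>\<^sub>F x in at_left M. d x > 0"
  proof -
    have "filterlim (\<lambda>x. - g2 x) at_top (at_left M)" unfolding g2_def M_def by (rule fabc_lim_left[OF SH2 a2])
    from ev_less[OF this tendsto_minus[OF isCont_left[OF cg1M]]] show ?thesis by (rule eventually_mono) (simp add: d_def)
  qed
  show False
  proof (cases "c1 > c2")
    case True
    obtain L0 where L0: "L0 < m" "(c1 - c2) * d L0 > 0" using pick_bot[OF Ebot, of m] by blast
    obtain L1 where L1: "L0 < L1" "L1 < m" "d L1 < 0" using pick_left[OF Eml L0(1)] by blast
    obtain R1 where R1: "M < R1" "R1 < M + 1" "d R1 < 0" using pick_right[OF EMr, of "M+1"] by auto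
    obtain R2 where R2: "R1 < R2" "(c1 - c2) * d R2 > 0" using pick_top[OF Etop, of R1] by blast
    have "d L0 > 0" "d R2 > 0" using L0 R2 True by (auto simp: zero_less_mult_iff)
    obtain z1 where z1: "L0 \<le> z1" "z1 \<le> L1" "d z1 = 0"
      using ivt[of L0 L1] L1 \<open>d L0 > 0\<close> mM by auto
    obtain z2 where z2: "R1 \<le> z2" "z2 \<le> R2" "d z2 = 0"
      using ivt[of R1 R2] R1 R2 \<open>d R2 > 0\<close> mM by auto
    have "z1 = xp" using zero[of z1] z1 L1 mM by auto
    moreover have "z2 = xp" using zero[of z2] z2 R1 mM by auto
    ultimately show False using z1 z2 L1 R1 mM by auto
  next
    case False
    hence cn: "c1 < c2" using cc by auto
    have negat: "d x < 0" if "(c1 - c2) * d x > 0" for x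
      using that cn by (auto simp: zero_less_mult_iff)
    consider "xp < m" | "m < xp \<and> xp < M" | "M < xp" using xp1 xp2 mM unfolding m_def M_def by linarith
    thus False
    proof cases
      case 1
      have "\<epsilon> \<le> m - xp" using 1 by (auto simp: \<epsilon>_def)
      hence vm: "v < m" using uv by auto
      obtain A where A: "A < u" "(c1 - c2) * d A > 0" using pick_bot[OF Ebot, of u] by blast
      obtain B where B: "v < B" "B < m" "d B < 0" using pick_left[OF Eml vm] by blast
      show False by (rule nocross[of A u v B]) (use A B uv mM negat[of A] in auto)
    next
      case 2
      have "\<epsilon> \<le> xp - m" "\<epsilon> \<le> M - xp" using 2 by (auto simp: \<epsilon>_def)
      hence um: "m < u" and vM: "v < M" using uv by auto
      obtain A where A: "m < A" "A < u" "d A > 0" using pick_right[OF Emr um] by blast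
      obtain B where B: "v < B" "B < M" "d B > 0" using pick_left[OF EMl vM] by blast
      show False by (rule nocross[of A u v B]) (use A B uv mM in auto)
    next
      case 3
      have "\<epsilon> \<le> xp - M" using 3 by (auto simp: \<epsilon>_def)
      hence uM: "M < u" using uv by auto
      obtain A where A: "M < A" "A < u" "d A < 0" using pick_right[OF EMr uM] by blast
      obtain B where B: "v < B" "(c1 - c2) * d B > 0" using pick_top[OF Etop, of v] by blast
      show False by (rule nocross[of A u v B]) (use A B uv mM negat[of B] in auto)
    qed
  qed
qed


lemma P1:
  assumes SH1: "strongly_hyperbolic f1" and SH2: "strongly_hyperbolic f2"
    and aa: "a1 > a2" and a2: "a2 > 0" and cc: "c1 \<noteq> c2"
  shows "\<exists>x. x \<noteq> -b \<and> fabc f1 f2 a1 b c1 x = fabc f1 f2 a2 b c2 x"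
proof -
  define d where "d = fabc f1 f2 (a1 - a2) b (c1 - c2)"
  have deq: "fabc f1 f2 a1 b c1 x - fabc f1 f2 a2 b c2 x = d x" for x
    unfolding d_def fabc_def by (auto simp: algebra_simps)
  have ap: "a1 - a2 > 0" using aa by simp
  have cont: "isCont d x" if "x \<noteq> -b" for x unfolding d_def using that by (intro fabc_isCont SH1 SH2)
  have Er: "\<forall>\<^sub>F x in at_right (-b). d x > 0"
    using fabc_lim_right[OF SH1 ap, of f2 b "c1 - c2"] unfolding d_def filterlim_at_top_dense by auto
  have El0: "\<forall>\<^sub>F x in at_left (-b). 0 < - d x"
    using fabc_lim_left[OF SH2 ap, of f1 b "c1 - c2"] unfolding d_def filterlim_at_top_dense by blast
  have El: "\<forall>\<^sub>F x in at_left (-b). d x < 0"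
    using El0 by (rule eventually_mono) simp
  have lt: "(d \<longlongrightarrow> c1 - c2) at_top" unfolding d_def by (rule fabc_lim_top[OF SH1])
  have lb: "(d \<longlongrightarrow> c1 - c2) at_bot" unfolding d_def by (rule fabc_lim_bot[OF SH2])
  have "\<exists>x. x \<noteq> -b \<and> d x = 0"
  proof (cases "c1 < c2")
    case True
    have Et: "\<forall>\<^sub>F x in at_top. d x < 0" using order_tendstoD(2)[OF lt] True by simp
    obtain R1 where R1: "-b < R1" "R1 < -b + 1" "d R1 > 0" using pick_right[OF Er, of "-b+1"] by auto
    obtain R2 where R2: "R1 < R2" "d R2 < 0" using pick_top[OF Et, of R1] by blast
    have "\<forall>x. R1 \<le> x \<and> x \<le> R2 \<longrightarrow> isCont d x" using cont R1 by force
    then obtain z where "R1 \<le> z" "z \<le> R2" "d z = 0" using IVT2[of d R2 0 R1] R1 R2 by auto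
    thus ?thesis using R1 by (intro exI[of _ z]) auto
  next
    case False
    hence F: "c1 > c2" using cc by auto
    have Eb: "\<forall>\<^sub>F x in at_bot. d x > 0" using order_tendstoD(1)[OF lb] F by simp
    obtain L0 where L0: "L0 < -b" "d L0 > 0" using pick_bot[OF Eb, of "-b"] by blast
    obtain L1 where L1: "L0 < L1" "L1 < -b" "d L1 < 0" using pick_left[OF El L0(1)] by blast
    have "\<forall>x. L0 \<le> x \<and> x \<le> L1 \<longrightarrow> isCont d x" using cont L1 by force
    then obtain z where "L0 \<le> z" "z \<le> L1" "d z = 0" using IVT2[of d L1 0 L0] L0 L1 by auto
    thus ?thesis using L1 by (intro exI[of _ z]) auto
  qed
  then obtain x where "x \<noteq> -b" "d x = 0" by blast
  thus ?thesis using deq[of x] by (intro exI[of _ x]) auto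
qed

lemma P2:
  assumes SH1: "strongly_hyperbolic f1" and SH2: "strongly_hyperbolic f2"
    and aa: "a1 > a2" and a2: "a2 > 0" and bb: "b1 \<noteq> b2"
  shows "\<exists>x. x \<noteq> -b1 \<and> x \<noteq> -b2 \<and> fabc f1 f2 a1 b1 c x = fabc f1 f2 a2 b2 c x"
proof -
  have a1: "a1 > 0" using aa a2 by simp
  define g1 where "g1 = fabc f1 f2 a1 b1 c"
  define g2 where "g2 = fabc f1 f2 a2 b2 c"
  define d where "d x = g1 x - g2 x" for x
  have cont: "isCont d x" if "x \<noteq> -b1" "x \<noteq> -b2" for x
    unfolding d_def[abs_def] g1_def g2_def using that
    by (intro continuous_intros fabc_isCont SH1 SH2)
  have "\<exists>x. x \<noteq> -b1 \<and> x \<noteq> -b2 \<and> d x = 0"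
  proof (cases "b2 < b1")
    case True
    have cg1: "isCont g1 (-b2)" unfolding g1_def using True by (intro fabc_isCont SH1 SH2) auto
    have EMr: "\<forall>\<^sub>F x in at_right (-b2). d x < 0"
    proof -
      have "filterlim g2 at_top (at_right (-b2))" unfolding g2_def by (rule fabc_lim_right[OF SH1 a2])
      from ev_less[OF this isCont_right[OF cg1]] show ?thesis by (rule eventually_mono) (simp add: d_def)
    qed
    have Et: "\<forall>\<^sub>F x in at_top. d x > 0"
    proof -
      have A: "\<forall>\<^sub>F x in at_top. a1 * f1 (x + b1) > a2 * f1 (x + b2)"
        by (rule ratio_top[OF SH1 aa a2])
      show ?thesis using A eventually_gt_at_top[of "-b2"]
        by eventually_elim (use True in \<open>simp add: d_def g1_def g2_def fabc_right\<close>)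
    qed
    obtain R1 where R1: "-b2 < R1" "R1 < -b2 + 1" "d R1 < 0" using pick_right[OF EMr, of "-b2+1"] by auto
    obtain R2 where R2: "R1 < R2" "d R2 > 0" using pick_top[OF Et, of R1] by blast
    have "\<forall>x. R1 \<le> x \<and> x \<le> R2 \<longrightarrow> isCont d x" using cont R1 True by force
    then obtain z where "R1 \<le> z" "z \<le> R2" "d z = 0" using IVT[of d R1 0 R2] R1 R2 by auto
    thus ?thesis using R1 True by (intro exI[of _ z]) auto
  next
    case False
    hence F: "b1 < b2" using bb by auto
    have cg1: "isCont g1 (-b2)" unfolding g1_def using F by (intro fabc_isCont SH1 SH2) auto
    have EMl: "\<forall>\<^sub>F x in at_left (-b2). d x > 0"
    proof -
      have "filterlim (\<lambda>x. - g2 x) at_top (at_left (-b2))" unfolding g2_def by (rule fabc_lim_left[OF SH2 a2])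
      from ev_less[OF this tendsto_minus[OF isCont_left[OF cg1]]] show ?thesis by (rule eventually_mono) (simp add: d_def)
    qed
    have Eb: "\<forall>\<^sub>F x in at_bot. d x < 0"
    proof -
      have A: "\<forall>\<^sub>F x in at_bot. a1 * f2 (-x - b1) > a2 * f2 (-x - b2)"
        by (rule ratio_bot[OF SH2 aa a2])
      show ?thesis using A eventually_le_at_bot[of "-b2 - 1"]
        by eventually_elim (use F in \<open>simp add: d_def g1_def g2_def fabc_left\<close>)
    qed
    obtain L0 where L0: "L0 < -b2" "d L0 < 0" using pick_bot[OF Eb, of "-b2"] by blast
    obtain L1 where L1: "L0 < L1" "L1 < -b2" "d L1 > 0" using pick_left[OF EMl L0(1)] by blast
    have "\<forall>x. L0 \<le> x \<and> x \<le> L1 \<longrightarrow> isCont d x" using cont L1 F by force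
    then obtain z where "L0 \<le> z" "z \<le> L1" "d z = 0" using IVT[of d L0 0 L1] L0 L1 by auto
    thus ?thesis using L1 F by (intro exI[of _ z]) auto
  qed
  thus ?thesis by (auto simp: d_def g1_def g2_def)
qed

lemma mem_FF: "(Fin x, Fin y) \<in> fabc_bar f1 f2 a b c \<longleftrightarrow> x \<noteq> -b \<and> y = fabc f1 f2 a b c x"
  by (auto simp: fabc_bar_def)
lemma mem_FI: "(Fin x, Infty) \<in> fabc_bar f1 f2 a b c \<longleftrightarrow> x = -b"
  by (auto simp: fabc_bar_def)
lemma mem_IF: "(Infty, Fin y) \<in> fabc_bar f1 f2 a b c \<longleftrightarrow> y = c"
  by (auto simp: fabc_bar_def)


theorem lemma4p15:
  fixes f1 f2 :: "real \<Rightarrow> real" and a1 a2 b1 b2 c1 c2 :: real and p :: "circ \<times> circ"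
  assumes "strongly_hyperbolic f1" and "strongly_hyperbolic f2"
    and "a1 > 0" and "a2 > 0"
    and "fabc_bar f1 f2 a1 b1 c1 \<noteq> fabc_bar f1 f2 a2 b2 c2"
    and "fabc_bar f1 f2 a1 b1 c1 \<inter> fabc_bar f1 f2 a2 b2 c2 = {p}"
  shows "(\<forall>b. p = (Fin b, Infty) \<longrightarrow> a1 = a2 \<and> b1 = -b \<and> b2 = -b \<and> c1 \<noteq> c2)
       \<and> (\<forall>c. p = (Infty, Fin c) \<longrightarrow> a1 = a2 \<and> b1 \<noteq> b2 \<and> c1 = c \<and> c2 = c)
       \<and> (\<forall>xp yp. p = (Fin xp, Fin yp) \<longrightarrow>
            deriv (fabc f1 f2 a1 b1 c1) xp = deriv (fabc f1 f2 a2 b2 c2) xp)"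
proof -
  note SH1 = assms(1) and SH2 = assms(2)
  have I: "q \<in> fabc_bar f1 f2 a1 b1 c1 \<and> q \<in> fabc_bar f1 f2 a2 b2 c2 \<longleftrightarrow> q = p" for q
    using assms(6) by blast
  have fin_int: "p = (Fin x, Fin (fabc f1 f2 a1 b1 c1 x))"
    if "x \<noteq> -b1" "x \<noteq> -b2" "fabc f1 f2 a1 b1 c1 x = fabc f1 f2 a2 b2 c2 x" for x
    using I[of "(Fin x, Fin (fabc f1 f2 a1 b1 c1 x))"] that by (simp add: mem_FF)
  have part1: "a1 = a2 \<and> b1 = -b \<and> b2 = -b \<and> c1 \<noteq> c2" if p: "p = (Fin b, Infty)" for b
  proof -
    have b1: "b1 = -b" and b2: "b2 = -b" using I[of p] p by (auto simp: mem_FI)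
    have cc: "c1 \<noteq> c2"
    proof
      assume "c1 = c2"
      hence "(Infty, Fin c1) = p" using I[of "(Infty, Fin c1)"] by (simp add: mem_IF)
      thus False using p by simp
    qed
    have "a1 = a2"
    proof (rule ccontr)
      assume "a1 \<noteq> a2"
      then consider "a1 > a2" | "a2 > a1" by linarith
      then obtain x where x: "x \<noteq> -b1" "fabc f1 f2 a1 b1 c1 x = fabc f1 f2 a2 b2 c2 x"
      proof cases
        case 1 thus ?thesis using P1[OF SH1 SH2 1 assms(4) cc, of "-b"] that b1 b2 by auto
      next
        case 2 thus ?thesis using P1[OF SH1 SH2 2 assms(3) cc[symmetric], of "-b"] that b1 b2 by force
      qed
      hence "p = (Fin x, Fin (fabc f1 f2 a1 b1 c1 x))" using fin_int b1 b2 by auto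
      thus False using p by simp
    qed
    thus ?thesis using b1 b2 cc by simp
  qed
  have part2: "a1 = a2 \<and> b1 \<noteq> b2 \<and> c1 = c \<and> c2 = c" if p: "p = (Infty, Fin c)" for c
  proof -
    have c1: "c1 = c" and c2: "c2 = c" using I[of p] p by (auto simp: mem_IF)
    have bb: "b1 \<noteq> b2"
    proof
      assume "b1 = b2"
      hence "(Fin (-b1), Infty) = p" using I[of "(Fin (-b1), Infty)"] by (simp add: mem_FI)
      thus False using p by simp
    qed
    have "a1 = a2"
    proof (rule ccontr)
      assume "a1 \<noteq> a2"
      then consider "a1 > a2" | "a2 > a1" by linarith
      then obtain x where x: "x \<noteq> -b1" "x \<noteq> -b2" "fabc f1 f2 a1 b1 c1 x = fabc f1 f2 a2 b2 c2 x"
      proof cases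
        case 1 thus ?thesis using P2[OF SH1 SH2 1 assms(4) bb, of c] that c1 c2 by auto
      next
        case 2 thus ?thesis using P2[OF SH1 SH2 2 assms(3) bb[symmetric], of c] that c1 c2 by force
      qed
      hence "p = (Fin x, Fin (fabc f1 f2 a1 b1 c1 x))" using fin_int by auto
      thus False using p by simp
    qed
    thus ?thesis using c1 c2 bb by simp
  qed
  have part3: "deriv (fabc f1 f2 a1 b1 c1) xp = deriv (fabc f1 f2 a2 b2 c2) xp"
    if p: "p = (Fin xp, Fin yp)" for xp yp
  proof -
    have xp1: "xp \<noteq> -b1" and xp2: "xp \<noteq> -b2"
      and eq: "fabc f1 f2 a1 b1 c1 xp = fabc f1 f2 a2 b2 c2 xp"
      using I[of p] p by (auto simp: mem_FF)
    have bb: "b1 \<noteq> b2"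
    proof
      assume "b1 = b2"
      hence "(Fin (-b1), Infty) = p" using I[of "(Fin (-b1), Infty)"] by (simp add: mem_FI)
      thus False using p by simp
    qed
    have cc: "c1 \<noteq> c2"
    proof
      assume "c1 = c2"
      hence "(Infty, Fin c1) = p" using I[of "(Infty, Fin c1)"] by (simp add: mem_IF)
      thus False using p by simp
    qed
    have uniq: "x = xp" if "x \<noteq> -b1" "x \<noteq> -b2" "fabc f1 f2 a1 b1 c1 x = fabc f1 f2 a2 b2 c2 x" for x
      using fin_int[OF that] p by simp
    show ?thesis
    proof (cases "b2 < b1")
      case True
      show ?thesis by (rule P3[OF SH1 SH2 assms(3,4) True cc xp1 xp2 eq uniq])
    next
      case False
      hence "b1 < b2" using bb by simp
      have "deriv (fabc f1 f2 a2 b2 c2) xp = deriv (fabc f1 f2 a1 b1 c1) xp"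
        by (rule P3[OF SH1 SH2 assms(4,3) \<open>b1 < b2\<close> cc[symmetric] xp2 xp1 eq[symmetric]])
           (use uniq in auto)
      thus ?thesis by simp
    qed
  qed
  show ?thesis using part1 part2 part3 by blast
qed

end
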